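(* Consider a scenario submodular cover instance: finite ground set $U$, monotone submodular $f:2^U\to\mathbb{Z}_{\ge 0}$ with $Q:=f(U)$, items $\mathbf{X}_1,\dots,\mathbf{X}_m$ with costs $c_e>0$ and explicit joint distribution with $s$ scenarios (scenario $\omega$ has probability $p_\omega>0$, and in it $\mathbf{X}_e$ realizes to $X_e(\omega)\in U$), where in every scenario the realizations of all items cover $f$. For a parameter $\delta\in(0,1)$, the partial cover version asks to probe items $\mathbf{R}$ with realization $R\subseteq U$ until either (i) the number of scenarios compatible with the observed realizations is less than $\delta s$, or (ii) $f(R)=Q$. There is a non-adaptive algorithm for this partial cover version with expected cost $O\!\left(\frac{1}{\delta}\left(\ln\frac{1}{\delta}+\log Q\right)\right)$ times the expected cost of an optimal adaptive solution for the (full) scenario submodular cover problem.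
   Context: A scenario $\omega$ is compatible with the observed realizations if every probed item $\mathbf{X}_e$ has realized to $X_e(\omega)$. A non-adaptive algorithm fixes an ordering of all items before observing any realization and then probes items in this order until the stopping condition holds; its cost is the expected total cost of probed items. An adaptive solution for full cover chooses each next item based on all realizations observed so far and must reach $f(S)=Q$ with probability one; the optimal one has minimum expected cost. *)

theory Defs
  imports Complex_Main
begin

text \<open>X e w is the realization of item e in scenario w.\<close>

definition ssc_instance ::
  "nat set \<Rightarrow> (nat set \<Rightarrow> nat) \<Rightarrow> nat set \<Rightarrow> nat set \<Rightarrow> (nat \<Rightarrow> real) \<Rightarrow> (nat \<Rightarrow> real)
   \<Rightarrow> (nat \<Rightarrow> nat \<Rightarrow> nat) \<Rightarrow> bool" where
  "ssc_instance U f I Omega c p X \<longleftrightarrow>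
     finite U \<and> finite I \<and> finite Omega \<and>
     (\<forall>A B. A \<subseteq> B \<and> B \<subseteq> U \<longrightarrow> f A \<le> f B) \<and>
     (\<forall>A B. A \<subseteq> U \<and> B \<subseteq> U \<longrightarrow> f (A \<union> B) + f (A \<inter> B) \<le> f A + f B) \<and>
     (\<forall>e\<in>I. c e > 0) \<and>
     (\<forall>w\<in>Omega. p w > 0) \<and> (\<Sum>w\<in>Omega. p w) = 1 \<and>
     (\<forall>e\<in>I. \<forall>w\<in>Omega. X e w \<in> U) \<and>
     (\<forall>w\<in>Omega. f ((\<lambda>e. X e w) ` I) = f U)"

definition compat :: "(nat \<Rightarrow> nat \<Rightarrow> nat) \<Rightarrow> nat set \<Rightarrow> nat set \<Rightarrow> nat \<Rightarrow> nat set" where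
  "compat X Omega S w = {w'\<in>Omega. \<forall>e\<in>S. X e w' = X e w}"

definition partial_stop ::
  "nat set \<Rightarrow> (nat set \<Rightarrow> nat) \<Rightarrow> nat set \<Rightarrow> (nat \<Rightarrow> nat \<Rightarrow> nat) \<Rightarrow> real \<Rightarrow> nat set \<Rightarrow> nat \<Rightarrow> bool" where
  "partial_stop U f Omega X \<delta> S w \<longleftrightarrow>
     real (card (compat X Omega S w)) < \<delta> * real (card Omega) \<or>
     f ((\<lambda>e. X e w) ` S) = f U"

definition na_stop_time ::
  "nat set \<Rightarrow> (nat set \<Rightarrow> nat) \<Rightarrow> nat set \<Rightarrow> (nat \<Rightarrow> nat \<Rightarrow> nat) \<Rightarrow> real \<Rightarrow> nat list \<Rightarrow> nat \<Rightarrow> nat" where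
  "na_stop_time U f Omega X \<delta> \<sigma> w = (LEAST k. partial_stop U f Omega X \<delta> (set (take k \<sigma>)) w)"

definition na_partial_cost ::
  "nat set \<Rightarrow> (nat set \<Rightarrow> nat) \<Rightarrow> nat set \<Rightarrow> (nat \<Rightarrow> real) \<Rightarrow> (nat \<Rightarrow> real)
   \<Rightarrow> (nat \<Rightarrow> nat \<Rightarrow> nat) \<Rightarrow> real \<Rightarrow> nat list \<Rightarrow> real" where
  "na_partial_cost U f Omega c p X \<delta> \<sigma> =
     (\<Sum>w\<in>Omega. p w * sum c (set (take (na_stop_time U f Omega X \<delta> \<sigma> w) \<sigma>)))"

text \<open>Adaptive policies: the next item is a function of the history of (item, realization) pairs.\<close>
type_synonym policy = "(nat \<times> nat) list \<Rightarrow> nat"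

fun hist :: "policy \<Rightarrow> (nat \<Rightarrow> nat \<Rightarrow> nat) \<Rightarrow> nat \<Rightarrow> nat \<Rightarrow> (nat \<times> nat) list" where
  "hist \<pi> X w 0 = []"
| "hist \<pi> X w (Suc k) = (let h = hist \<pi> X w k in h @ [(\<pi> h, X (\<pi> h) w)])"

definition full_covered :: "nat set \<Rightarrow> (nat set \<Rightarrow> nat) \<Rightarrow> policy \<Rightarrow> (nat \<Rightarrow> nat \<Rightarrow> nat) \<Rightarrow> nat \<Rightarrow> nat \<Rightarrow> bool" where
  "full_covered U f \<pi> X w k \<longleftrightarrow> f (snd ` set (hist \<pi> X w k)) = f U"

definition adaptive_valid ::
  "nat set \<Rightarrow> (nat set \<Rightarrow> nat) \<Rightarrow> nat set \<Rightarrow> nat set \<Rightarrow> (nat \<Rightarrow> nat \<Rightarrow> nat) \<Rightarrow> policy \<Rightarrow> bool" where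
  "adaptive_valid U f I Omega X \<pi> \<longleftrightarrow>
     (\<forall>w\<in>Omega. \<exists>k. full_covered U f \<pi> X w k \<and> (\<forall>j<k. \<pi> (hist \<pi> X w j) \<in> I))"

definition adaptive_cost ::
  "nat set \<Rightarrow> (nat set \<Rightarrow> nat) \<Rightarrow> nat set \<Rightarrow> (nat \<Rightarrow> real) \<Rightarrow> (nat \<Rightarrow> real)
   \<Rightarrow> (nat \<Rightarrow> nat \<Rightarrow> nat) \<Rightarrow> policy \<Rightarrow> real" where
  "adaptive_cost U f Omega c p X \<pi> =
     (\<Sum>w\<in>Omega. p w * sum c (fst ` set (hist \<pi> X w (LEAST k. full_covered U f \<pi> X w k))))"

definition opt_adaptive ::
  "nat set \<Rightarrow> (nat set \<Rightarrow> nat) \<Rightarrow> nat set \<Rightarrow> nat set \<Rightarrow> (nat \<Rightarrow> real) \<Rightarrow> (nat \<Rightarrow> real)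
   \<Rightarrow> (nat \<Rightarrow> nat \<Rightarrow> nat) \<Rightarrow> real" where
  "opt_adaptive U f I Omega c p X =
     Inf {adaptive_cost U f Omega c p X \<pi> | \<pi>. adaptive_valid U f I Omega X \<pi>}"

end

theory Submission
  imports Defs "HOL-Library.FuncSet"
begin

lemma hist_length[simp]: "length (hist \<pi> X w n) = n"
  by (induction n) (auto simp: Let_def)

lemma hist_take: "k \<le> n \<Longrightarrow> take k (hist \<pi> X w n) = hist \<pi> X w k"
proof (induction n)
  case 0 then show ?case by simp
next
  case (Suc n)
  show ?case
  proof (cases "k = Suc n")
    case True then show ?thesis by (metis hist_length order_refl take_all)
  next
    case False
    then have "k \<le> n" using Suc.prems by simp
    then show ?thesis using Suc.IH by (simp add: Let_def)
  qed
qed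

lemma hist_set: "set (hist \<pi> X w n) = (\<lambda>k. (\<pi> (hist \<pi> X w k), X (\<pi> (hist \<pi> X w k)) w)) ` {..<n}"
  by (induction n) (auto simp: Let_def lessThan_Suc)

lemma hist_fst: "fst ` set (hist \<pi> X w n) = (\<lambda>k. \<pi> (hist \<pi> X w k)) ` {..<n}"
  by (simp add: hist_set image_image)

lemma hist_snd: "snd ` set (hist \<pi> X w n) = (\<lambda>e. X e w) ` fst ` set (hist \<pi> X w n)"
  by (simp add: hist_set image_image)

lemma hist_agree:
  "(\<forall>k<n. X (\<pi> (hist \<pi> X w k)) w' = X (\<pi> (hist \<pi> X w k)) w) \<Longrightarrow> hist \<pi> X w' n = hist \<pi> X w n"
  by (induction n) (auto simp: Let_def)

locale sctx =
  fixes U :: "nat set" and f :: "nat set \<Rightarrow> nat" and I Om :: "nat set"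
    and c p :: "nat \<Rightarrow> real" and X :: "nat \<Rightarrow> nat \<Rightarrow> nat" and \<delta> :: real and \<pi> :: policy
  assumes inst: "ssc_instance U f I Om c p X" and dpos: "0 < \<delta>" and dlt: "\<delta> < 1"
    and valid: "adaptive_valid U f I Om X \<pi>"
begin

lemma finU: "finite U" and finI: "finite I" and finOm: "finite Om"
  and cpos: "\<And>e. e \<in> I \<Longrightarrow> c e > 0"
  and ppos: "\<And>w. w \<in> Om \<Longrightarrow> p w > 0"
  and psum: "(\<Sum>w\<in>Om. p w) = 1"
  and XU: "\<And>e w. e \<in> I \<Longrightarrow> w \<in> Om \<Longrightarrow> X e w \<in> U"
  and fmono: "\<And>A B. A \<subseteq> B \<Longrightarrow> B \<subseteq> U \<Longrightarrow> f A \<le> f B"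
  and fcov: "\<And>w. w \<in> Om \<Longrightarrow> f ((\<lambda>e. X e w) ` I) = f U"
  using inst unfolding ssc_instance_def by auto

lemma Om_ne: "Om \<noteq> {}" using psum by auto

definition Kw where "Kw w = (LEAST k. full_covered U f \<pi> X w k)"
definition Sw where "Sw w k = {w'\<in>Om. hist \<pi> X w' k = hist \<pi> X w k}"
definition jw where "jw w = (LEAST k. k = Kw w \<or> real (card (Sw w k)) < \<delta> * real (card Om))"
definition Tw where "Tw w = fst ` set (hist \<pi> X w (jw w))"
definition Dw where "Dw w = sum c (Tw w)"

lemma K_props:
  assumes "w \<in> Om"
  shows "full_covered U f \<pi> X w (Kw w)" "\<And>k. k < Kw w \<Longrightarrow> \<pi> (hist \<pi> X w k) \<in> I"
proof -
  obtain k0 where k0: "full_covered U f \<pi> X w k0" "\<forall>j<k0. \<pi> (hist \<pi> X w j) \<in> I"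
    using valid assms unfolding adaptive_valid_def by blast
  show "full_covered U f \<pi> X w (Kw w)" unfolding Kw_def by (rule LeastI[of "full_covered U f \<pi> X w", OF k0(1)])
  have "Kw w \<le> k0" unfolding Kw_def by (rule Least_le[of "full_covered U f \<pi> X w", OF k0(1)])
  then show "\<And>k. k < Kw w \<Longrightarrow> \<pi> (hist \<pi> X w k) \<in> I" using k0(2) by auto
qed

lemma j_le: "jw w \<le> Kw w"
  unfolding jw_def by (rule Least_le) simp

lemma j_spec: "jw w = Kw w \<or> real (card (Sw w (jw w))) < \<delta> * real (card Om)"
  unfolding jw_def by (rule LeastI[where k="Kw w"]) simp

lemma j_heavy: "k < jw w \<Longrightarrow> \<delta> * real (card Om) \<le> real (card (Sw w k))"
  using not_less_Least[of k "\<lambda>k. k = Kw w \<or> real (card (Sw w k)) < \<delta> * real (card Om)"]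
  unfolding jw_def by auto

lemma T_eq: "Tw w = (\<lambda>k. \<pi> (hist \<pi> X w k)) ` {..<jw w}"
  unfolding Tw_def by (rule hist_fst)

lemma T_sub: "w \<in> Om \<Longrightarrow> Tw w \<subseteq> I"
proof -
  assume w: "w \<in> Om"
  show ?thesis unfolding T_eq
  proof
    fix e assume "e \<in> (\<lambda>k. \<pi> (hist \<pi> X w k)) ` {..<jw w}"
    then obtain k where "k < jw w" "e = \<pi> (hist \<pi> X w k)" by auto
    then show "e \<in> I" using K_props(2)[OF w, of k] j_le[of w] by auto
  qed
qed

lemma cnn: "e \<in> I \<Longrightarrow> 0 \<le> c e" using cpos by (simp add: less_imp_le)

lemma cost_sub: "w \<in> Om \<Longrightarrow> fst ` set (hist \<pi> X w (Kw w)) \<subseteq> I"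
  using K_props(2) by (auto simp: hist_fst)

lemma D_le_cost: assumes "w \<in> Om" shows "Dw w \<le> sum c (fst ` set (hist \<pi> X w (Kw w)))"
proof -
  have "Tw w \<subseteq> fst ` set (hist \<pi> X w (Kw w))"
    unfolding T_eq hist_fst using j_le[of w] by auto
  then show ?thesis unfolding Dw_def
    by (intro sum_mono2) (use cost_sub[OF assms] cnn in auto)
qed

lemma D_nonneg: "w \<in> Om \<Longrightarrow> 0 \<le> Dw w"
  unfolding Dw_def using T_sub cnn by (intro sum_nonneg) auto

lemma stop_T:
  assumes w: "w \<in> Om" and TA: "Tw w \<subseteq> A" and AI: "A \<subseteq> I"
  shows "partial_stop U f Om X \<delta> A w"
  using j_spec[of w]
proof
  assume jK: "jw w = Kw w"
  have "f U = f (snd ` set (hist \<pi> X w (Kw w)))"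
    using K_props(1)[OF w] unfolding full_covered_def by simp
  also have "\<dots> = f ((\<lambda>e. X e w) ` Tw w)" unfolding Tw_def jK hist_snd ..
  also have "\<dots> \<le> f ((\<lambda>e. X e w) ` A)"
    by (rule fmono) (use TA AI XU w in auto)
  finally have "f U \<le> f ((\<lambda>e. X e w) ` A)" .
  moreover have "f ((\<lambda>e. X e w) ` A) \<le> f U"
    by (rule fmono) (use AI XU w in auto)
  ultimately show ?thesis unfolding partial_stop_def by simp
next
  assume sm: "real (card (Sw w (jw w))) < \<delta> * real (card Om)"
  have "compat X Om A w \<subseteq> Sw w (jw w)"
  proof
    fix w' assume "w' \<in> compat X Om A w"
    then have w': "w' \<in> Om" "\<forall>e\<in>A. X e w' = X e w" unfolding compat_def by auto
    have "hist \<pi> X w' (jw w) = hist \<pi> X w (jw w)"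
      by (rule hist_agree) (use w'(2) TA in \<open>auto simp: T_eq\<close>)
    then show "w' \<in> Sw w (jw w)" using w' unfolding Sw_def by auto
  qed
  then have "card (compat X Om A w) \<le> card (Sw w (jw w))"
    by (intro card_mono) (auto simp: Sw_def finOm)
  then show ?thesis using sm unfolding partial_stop_def by linarith
qed

end
context sctx begin

lemma union_bound:
  assumes Dd: "0 \<le> Dd"
  shows "sum c (\<Union>w\<in>{w\<in>Om. Dw w \<le> Dd}. Tw w) \<le> Dd / \<delta>"
proof -
  define W0 where "W0 = {w\<in>Om. Dw w \<le> Dd}"
  define A where "A = (\<Union>w\<in>W0. Tw w)"
  have AI: "A \<subseteq> I" unfolding A_def W0_def using T_sub by auto
  have finA: "finite A" using AI finI finite_subset by blast
  have "\<forall>e\<in>A. \<exists>wk. fst wk \<in> W0 \<and> snd wk < jw (fst wk) \<and> e = \<pi> (hist \<pi> X (fst wk) (snd wk))"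
  proof
    fix e assume "e \<in> A"
    then obtain w where "w \<in> W0" "e \<in> Tw w" unfolding A_def by auto
    then obtain k where "k < jw w" "e = \<pi> (hist \<pi> X w k)" unfolding T_eq by auto
    then show "\<exists>wk. fst wk \<in> W0 \<and> snd wk < jw (fst wk) \<and> e = \<pi> (hist \<pi> X (fst wk) (snd wk))"
      using \<open>w \<in> W0\<close> by (intro exI[of _ "(w,k)"]) auto
  qed
  then obtain g where g: "\<forall>e\<in>A. fst (g e) \<in> W0 \<and> snd (g e) < jw (fst (g e)) \<and> e = \<pi> (hist \<pi> X (fst (g e)) (snd (g e)))"
    by (rule bchoice[elim_format]) blast
  define ww where "ww e = fst (g e)" for e
  define kk where "kk e = snd (g e)" for e
  have g1: "ww e \<in> W0" "kk e < jw (ww e)" "e = \<pi> (hist \<pi> X (ww e) (kk e))" if "e \<in> A" for e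
    using g that unfolding ww_def kk_def by auto
  define Se where "Se e = Sw (ww e) (kk e)" for e
  have SeOm: "Se e \<subseteq> Om" for e unfolding Se_def Sw_def by auto
  have heavy: "\<delta> * real (card Om) \<le> real (card (Se e))" if "e \<in> A" for e
    unfolding Se_def using j_heavy g1(2)[OF that] by auto
  have per: "sum c {e\<in>A. w' \<in> Se e} \<le> Dd" if w': "w' \<in> Om" for w'
  proof (cases "{e\<in>A. w' \<in> Se e} = {}")
    case True then show ?thesis using Dd by (simp only: sum.empty)
  next
    case False
    define E where "E = {e\<in>A. w' \<in> Se e}"
    have finE: "finite E" unfolding E_def using finA by auto
    have Ene: "E \<noteq> {}" using False unfolding E_def .
    have "Max (kk ` E) \<in> kk ` E" using finE Ene by (intro Max_in) auto
    then obtain es where es: "es \<in> E" "kk es = Max (kk ` E)" by auto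
    have esmax: "kk e \<le> kk es" if "e \<in> E" for e using es(2) finE that by simp
    have esA: "es \<in> A" using es(1) unfolding E_def by auto
    have ES: "E \<subseteq> Tw (ww es)"
    proof
      fix e assume eE: "e \<in> E"
      then have eA: "e \<in> A" and we: "w' \<in> Se e" unfolding E_def by auto
      have h1: "hist \<pi> X w' (kk e) = hist \<pi> X (ww e) (kk e)"
        using we unfolding Se_def Sw_def by auto
      have h2: "hist \<pi> X w' (kk es) = hist \<pi> X (ww es) (kk es)"
        using es(1) unfolding E_def Se_def Sw_def by auto
      have le: "kk e \<le> kk es" using esmax eE .
      have "hist \<pi> X w' (kk e) = hist \<pi> X (ww es) (kk e)"
        using hist_take[OF le, of \<pi> X w'] hist_take[OF le, of \<pi> X "ww es"] h2 by simp
      then have "e = \<pi> (hist \<pi> X (ww es) (kk e))" using g1(3)[OF eA] h1 by simp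
      moreover have "kk e < jw (ww es)" using le g1(2)[OF esA] by simp
      ultimately show "e \<in> Tw (ww es)" unfolding T_eq by auto
    qed
    have wesOm: "ww es \<in> Om" and Dles: "Dw (ww es) \<le> Dd" using g1(1)[OF esA] unfolding W0_def by auto
    have "sum c E \<le> sum c (Tw (ww es))"
      by (intro sum_mono2) (use ES T_sub[OF wesOm] cnn finI finite_subset in auto)
    also have "\<dots> \<le> Dd" using Dles unfolding Dw_def .
    finally show ?thesis unfolding E_def .
  qed
  have cardS: "c e * real (card (Se e)) = (\<Sum>w'\<in>Om. if w' \<in> Se e then c e else 0)" for e
  proof -
    have "(\<Sum>w'\<in>Om. if w' \<in> Se e then c e else 0) = sum (\<lambda>_. c e) {w'\<in>Om. w' \<in> Se e}"
      by (rule sum.inter_filter[symmetric]) (rule finOm)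
    also have "{w'\<in>Om. w' \<in> Se e} = Se e" using SeOm by auto
    finally show ?thesis by simp
  qed
  have "\<delta> * real (card Om) * sum c A = (\<Sum>e\<in>A. c e * (\<delta> * real (card Om)))"
    by (simp add: sum_distrib_right mult.commute)
  also have "\<dots> \<le> (\<Sum>e\<in>A. c e * real (card (Se e)))"
    by (intro sum_mono mult_left_mono) (use heavy cnn AI in auto)
  also have "\<dots> = (\<Sum>e\<in>A. \<Sum>w'\<in>Om. if w' \<in> Se e then c e else 0)"
    using cardS by simp
  also have "\<dots> = (\<Sum>w'\<in>Om. \<Sum>e\<in>A. if w' \<in> Se e then c e else 0)"
    by (rule sum.swap)
  also have "\<dots> = (\<Sum>w'\<in>Om. sum c {e\<in>A. w' \<in> Se e})"
    by (intro sum.cong refl sum.inter_filter[symmetric] finA)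
  also have "\<dots> \<le> (\<Sum>w'\<in>Om. Dd)"
    by (intro sum_mono per)
  also have "\<dots> = real (card Om) * Dd" by simp
  finally have ineq: "\<delta> * real (card Om) * sum c A \<le> real (card Om) * Dd" .
  have cpos': "real (card Om) > 0" using Om_ne finOm by (simp add: card_gt_0_iff)
  then have "\<delta> * sum c A \<le> Dd" using ineq
    by (metis (no_types, opaque_lifting) mult.assoc mult.left_commute mult_le_cancel_left_pos)
  then have "sum c A \<le> Dd / \<delta>" using dpos by (simp add: field_simps)
  then show ?thesis unfolding A_def W0_def .
qed

end

lemma filter_sorted_takeWhile:
  fixes key :: "'a \<Rightarrow> real"
  shows "sorted (map key xs) \<Longrightarrow> filter (\<lambda>e. key e \<le> D) xs = takeWhile (\<lambda>e. key e \<le> D) xs"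
proof (induction xs)
  case Nil then show ?case by simp
next
  case (Cons x xs)
  then have IH: "filter (\<lambda>e. key e \<le> D) xs = takeWhile (\<lambda>e. key e \<le> D) xs"
    and ge: "\<forall>y\<in>set xs. key x \<le> key y" by auto
  show ?case
  proof (cases "key x \<le> D")
    case True then show ?thesis using IH by simp
  next
    case False
    then have "filter (\<lambda>e. key e \<le> D) xs = []" using ge by (auto simp: filter_empty_conv)
    then show ?thesis using False by simp
  qed
qed

lemma sdiv: "(\<Sum>w\<in>A. (p w::real) * (F w / d)) = (\<Sum>w\<in>A. p w * F w) / d"
  by (simp add: sum_divide_distrib)

context sctx begin

definition Big where "Big = sum c I + 1"
definition key where "key e = Min (insert Big (Dw ` {w\<in>Om. e \<in> Tw w}))"
definition sig where "sig = sort_key key (sorted_list_of_set I)"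

lemma sig_props: "distinct sig" "set sig = I" "sorted (map key sig)"
  unfolding sig_def using finI by auto

lemma D_lt_Big: "w \<in> Om \<Longrightarrow> Dw w < Big"
proof -
  assume w: "w \<in> Om"
  have "Dw w \<le> sum c I" unfolding Dw_def
    by (intro sum_mono2) (use T_sub[OF w] cnn finI in auto)
  then show ?thesis unfolding Big_def by simp
qed

lemma key_le: "w \<in> Om \<Longrightarrow> e \<in> Tw w \<Longrightarrow> key e \<le> Dw w"
  unfolding key_def by (rule Min_le) (use finOm in auto)

lemma key_le_D:
  assumes w0: "w0 \<in> Om" and k: "key e \<le> Dw w0"
  shows "\<exists>w\<in>Om. e \<in> Tw w \<and> Dw w \<le> Dw w0"
proof -
  have "key e \<in> insert Big (Dw ` {w\<in>Om. e \<in> Tw w})"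
    unfolding key_def by (rule Min_in) (use finOm in auto)
  moreover have "key e \<noteq> Big" using k D_lt_Big[OF w0] by auto
  ultimately show ?thesis using k by auto
qed

lemma na_scenario:
  assumes w0: "w0 \<in> Om"
  shows "sum c (set (take (na_stop_time U f Om X \<delta> sig w0) sig)) \<le> Dw w0 / \<delta>"
proof -
  define P where "P = (\<lambda>e. key e \<le> Dw w0)"
  define n where "n = length (takeWhile P sig)"
  have tk: "take n sig = filter P sig"
    unfolding n_def P_def using filter_sorted_takeWhile[OF sig_props(3)] takeWhile_eq_take by metis
  have A0: "set (take n sig) = {e\<in>I. P e}" unfolding tk using sig_props(2) by auto
  have stop: "partial_stop U f Om X \<delta> (set (take n sig)) w0"
    by (rule stop_T[OF w0]) (use A0 T_sub[OF w0] key_le[OF w0] in \<open>auto simp: P_def\<close>)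
  have "na_stop_time U f Om X \<delta> sig w0 \<le> n"
    unfolding na_stop_time_def by (rule Least_le) (rule stop)
  then have sub1: "set (take (na_stop_time U f Om X \<delta> sig w0) sig) \<subseteq> set (take n sig)"
    by (rule set_take_subset_set_take)
  have sub2: "set (take n sig) \<subseteq> (\<Union>w\<in>{w\<in>Om. Dw w \<le> Dw w0}. Tw w)"
    using A0 key_le_D[OF w0] unfolding P_def by auto
  have "sum c (set (take (na_stop_time U f Om X \<delta> sig w0) sig)) \<le> sum c (\<Union>w\<in>{w\<in>Om. Dw w \<le> Dw w0}. Tw w)"
  proof (intro sum_mono2)
    show "finite (\<Union>w\<in>{w\<in>Om. Dw w \<le> Dw w0}. Tw w)"
    proof (rule finite_UN_I)
      show "finite {w\<in>Om. Dw w \<le> Dw w0}" using finOm by simp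
      show "\<And>a. a \<in> {w\<in>Om. Dw w \<le> Dw w0} \<Longrightarrow> finite (Tw a)"
        using T_sub finI finite_subset by blast
    qed
    show "set (take (na_stop_time U f Om X \<delta> sig w0) sig) \<subseteq> (\<Union>w\<in>{w\<in>Om. Dw w \<le> Dw w0}. Tw w)"
      using sub1 sub2 by blast
    show "\<And>b. b \<in> (\<Union>w\<in>{w\<in>Om. Dw w \<le> Dw w0}. Tw w) - set (take (na_stop_time U f Om X \<delta> sig w0) sig) \<Longrightarrow> 0 \<le> c b"
      using T_sub cnn by blast
  qed
  also have "\<dots> \<le> Dw w0 / \<delta>" by (rule union_bound[OF D_nonneg[OF w0]])
  finally show ?thesis .
qed

lemma na_bound:
  "na_partial_cost U f Om c p X \<delta> sig \<le> adaptive_cost U f Om c p X \<pi> / \<delta>"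
proof -
  have "na_partial_cost U f Om c p X \<delta> sig \<le> (\<Sum>w\<in>Om. p w * (Dw w / \<delta>))"
    unfolding na_partial_cost_def
    by (intro sum_mono mult_left_mono na_scenario) (use ppos in \<open>auto simp: less_imp_le\<close>)
  also have "\<dots> \<le> (\<Sum>w\<in>Om. p w * (sum c (fst ` set (hist \<pi> X w (Kw w))) / \<delta>))"
    by (intro sum_mono mult_left_mono divide_right_mono D_le_cost)
      (use ppos dpos in \<open>auto simp: less_imp_le\<close>)
  also have "\<dots> = adaptive_cost U f Om c p X \<pi> / \<delta>"
    unfolding adaptive_cost_def Kw_def by (rule sdiv)
  finally show ?thesis .
qed

lemma main_loc: "\<exists>\<sigma>. distinct \<sigma> \<and> set \<sigma> = I \<and>
   na_partial_cost U f Om c p X \<delta> \<sigma> \<le> adaptive_cost U f Om c p X \<pi> / \<delta>"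
  using sig_props na_bound by blast

lemma cost_nonneg: "0 \<le> adaptive_cost U f Om c p X \<pi>"
  unfolding adaptive_cost_def
proof (rule sum_nonneg)
  fix w assume w: "w \<in> Om"
  have "0 \<le> p w" using ppos[OF w] by simp
  moreover have "0 \<le> sum c (fst ` set (hist \<pi> X w (LEAST k. full_covered U f \<pi> X w k)))"
    using cost_sub[OF w, unfolded Kw_def] cnn by (intro sum_nonneg) blast
  ultimately show "0 \<le> p w * sum c (fst ` set (hist \<pi> X w (LEAST k. full_covered U f \<pi> X w k)))"
    by simp
qed

end

lemma valid_exists:
  assumes inst: "ssc_instance U f I Om c p X"
  shows "\<exists>\<pi>. adaptive_valid U f I Om X \<pi>"
proof -
  define L where "L = sorted_list_of_set I"
  have finI: "finite I" using inst unfolding ssc_instance_def by auto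
  have setL: "set L = I" unfolding L_def using finI by simp
  define \<pi>0 :: policy where "\<pi>0 h = L ! length h" for h
  have st: "\<pi>0 (hist \<pi>0 X w k) = L ! k" for w k unfolding \<pi>0_def by simp
  have fstI: "fst ` set (hist \<pi>0 X w (length L)) = I" for w
  proof -
    have "fst ` set (hist \<pi>0 X w (length L)) = (\<lambda>k. L ! k) ` {..<length L}"
      by (simp add: hist_fst st)
    also have "\<dots> = set L" by (auto simp: set_conv_nth)
    finally show ?thesis using setL by simp
  qed
  have "adaptive_valid U f I Om X \<pi>0"
    unfolding adaptive_valid_def
  proof
    fix w assume w: "w \<in> Om"
    have "full_covered U f \<pi>0 X w (length L)"
      unfolding full_covered_def hist_snd fstI using inst w unfolding ssc_instance_def by auto
    moreover have "\<forall>j<length L. \<pi>0 (hist \<pi>0 X w j) \<in> I"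
      using st setL nth_mem by auto
    ultimately show "\<exists>k. full_covered U f \<pi>0 X w k \<and> (\<forall>j<k. \<pi>0 (hist \<pi>0 X w j) \<in> I)" by blast
  qed
  then show ?thesis by blast
qed

lemma costs_finite:
  assumes inst: "ssc_instance U f I Om c p X" and d: "0 < (\<delta>::real)" "\<delta> < 1"
  shows "finite {adaptive_cost U f Om c p X \<pi> | \<pi>. adaptive_valid U f I Om X \<pi>}"
proof -
  have finI: "finite I" and finOm: "finite Om" using inst unfolding ssc_instance_def by auto
  have "{adaptive_cost U f Om c p X \<pi> | \<pi>. adaptive_valid U f I Om X \<pi>}
     \<subseteq> (\<lambda>g. \<Sum>w\<in>Om. p w * sum c (g w)) ` (Om \<rightarrow>\<^sub>E Pow I)"
  proof
    fix v assume "v \<in> {adaptive_cost U f Om c p X \<pi> | \<pi>. adaptive_valid U f I Om X \<pi>}"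
    then obtain \<pi> where v: "v = adaptive_cost U f Om c p X \<pi>" and val: "adaptive_valid U f I Om X \<pi>" by auto
    interpret sctx U f I Om c p X \<delta> \<pi> using inst d val by unfold_locales
    define g where "g = restrict (\<lambda>w. fst ` set (hist \<pi> X w (LEAST k. full_covered U f \<pi> X w k))) Om"
    have "g \<in> Om \<rightarrow>\<^sub>E Pow I" unfolding g_def using cost_sub[unfolded Kw_def] by auto
    moreover have "v = (\<Sum>w\<in>Om. p w * sum c (g w))"
      unfolding v adaptive_cost_def g_def by (intro sum.cong) auto
    ultimately show "v \<in> (\<lambda>g. \<Sum>w\<in>Om. p w * sum c (g w)) ` (Om \<rightarrow>\<^sub>E Pow I)" by blast
  qed
  moreover have "finite (Om \<rightarrow>\<^sub>E Pow I)" using finOm finI by (intro finite_PiE) auto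
  ultimately show ?thesis using finite_subset by blast
qed

theorem mainTheorem4:
  shows "\<exists>C>0. \<forall>U f I Omega c p X (\<delta>::real).
     ssc_instance U f I Omega c p X \<and> 0 < \<delta> \<and> \<delta> < 1 \<longrightarrow>
     (\<exists>\<sigma>. distinct \<sigma> \<and> set \<sigma> = I \<and>
        na_partial_cost U f Omega c p X \<delta> \<sigma>
          \<le> C * ((1 / \<delta>) * (1 + ln (1 / \<delta>) + ln (max 1 (real (f U)))))
              * opt_adaptive U f I Omega c p X)"
proof (intro exI[of _ 1] conjI allI impI)
  show "(0::real) < 1" by simp
  fix U f I Omega c p X and \<delta> :: real
  assume H: "ssc_instance U f I Omega c p X \<and> 0 < \<delta> \<and> \<delta> < 1"
  then have inst: "ssc_instance U f I Omega c p X" and d: "0 < \<delta>" "\<delta> < 1" by auto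
  define V where "V = {adaptive_cost U f Omega c p X \<pi> | \<pi>. adaptive_valid U f I Omega X \<pi>}"
  have finV: "finite V" unfolding V_def by (rule costs_finite[OF inst d])
  have neV: "V \<noteq> {}" unfolding V_def using valid_exists[OF inst] by auto
  have "opt_adaptive U f I Omega c p X = Min V"
    unfolding opt_adaptive_def V_def[symmetric] by (rule cInf_eq_Min[OF finV neV])
  moreover have "Min V \<in> V" using finV neV by (rule Min_in)
  ultimately obtain \<pi> where val: "adaptive_valid U f I Omega X \<pi>"
    and opt: "opt_adaptive U f I Omega c p X = adaptive_cost U f Omega c p X \<pi>"
    unfolding V_def by auto
  interpret sctx U f I Omega c p X \<delta> \<pi> using inst d val by unfold_locales
  obtain \<sigma> where \<sigma>: "distinct \<sigma>" "set \<sigma> = I"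
    "na_partial_cost U f Omega c p X \<delta> \<sigma> \<le> adaptive_cost U f Omega c p X \<pi> / \<delta>"
    using main_loc by blast
  define a where "a = adaptive_cost U f Omega c p X \<pi>"
  have a0: "0 \<le> a" unfolding a_def by (rule cost_nonneg)
  have l1: "0 \<le> ln (1 / \<delta>)" using d by simp
  have l2: "0 \<le> ln (max 1 (real (f U)))" by simp
  have "1 / \<delta> \<le> (1 / \<delta>) * (1 + ln (1 / \<delta>) + ln (max 1 (real (f U))))"
    using l1 l2 d by (simp add: field_simps)
  then have "a / \<delta> \<le> 1 * ((1 / \<delta>) * (1 + ln (1 / \<delta>) + ln (max 1 (real (f U))))) * a"
    using a0 by (metis divide_inverse inverse_eq_divide mult.commute mult_1 mult_right_mono)
  then show "\<exists>\<sigma>. distinct \<sigma> \<and> set \<sigma> = I \<and>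
        na_partial_cost U f Omega c p X \<delta> \<sigma>
          \<le> 1 * ((1 / \<delta>) * (1 + ln (1 / \<delta>) + ln (max 1 (real (f U)))))
              * opt_adaptive U f I Omega c p X"
    using \<sigma> opt unfolding a_def by (intro exI[of _ \<sigma>]) auto
qed

end
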